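(* Let $k\in[n-1]$, $w\in S_n^{k\searrow}$, and suppose there is an increasing $k$-chain from some $u$ to $w$. Suppose some step $u'\lessdot_k w'$ of this chain exchanges the values $a<b$, and that $b$ is at position $i$ in $w'$. Then: (1) $b$ is not among $u(1),\dots,u(k)$; (2) for every $c$ with $a<c<b$, $u^{-1}(c)<i$; (3) for every $c$ with $a<c<b$, the value $c$ is not exchanged by any step of the chain.
   Context: Permutations in one-line notation; $wt_{i,j}$ is $w$ with positions $i<j$ swapped; $\ell$ the number of inversions. $u\lessdot w$ iff $w=ut_{i,j}$, $i<j$, $\ell(w)=\ell(u)+1$; $u\lessdot_k w$ iff moreover $i\le k<j$. A $k$-chain $v_1\lessdot_k\cdots\lessdot_k v_d$ is increasing if the smaller of the two values exchanged at each step strictly increases along the chain. $S_n^{k\searrow}=\{v\in S_n: v(k+1)>\dots>v(n)\}$. *)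

theory Defs
  imports "HOL-Combinatorics.Combinatorics"
begin

text \<open>Permutations of [n] = {1..n} in one-line notation are functions
  nat => nat that permute {1..n}.  w t_{i,j} is w composed with the
  transposition of positions i and j.\<close>

definition ninv :: "nat \<Rightarrow> (nat \<Rightarrow> nat) \<Rightarrow> nat" where
  "ninv n w = card {(p, q). 1 \<le> p \<and> p < q \<and> q \<le> n \<and> w q < w p}"

definition kstep :: "nat \<Rightarrow> nat \<Rightarrow> (nat \<Rightarrow> nat) \<Rightarrow> (nat \<Rightarrow> nat) \<Rightarrow> nat \<Rightarrow> nat \<Rightarrow> bool" where
  "kstep n k u w x y \<longleftrightarrow> (\<exists>i j. 1 \<le> i \<and> i \<le> k \<and> k < j \<and> j \<le> n \<and>
      w = u \<circ> Transposition.transpose i j \<and> ninv n w = ninv n u + 1 \<and>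
      x = u i \<and> y = u j)"

definition kcover :: "nat \<Rightarrow> nat \<Rightarrow> (nat \<Rightarrow> nat) \<Rightarrow> (nat \<Rightarrow> nat) \<Rightarrow> bool" where
  "kcover n k u w \<longleftrightarrow> (\<exists>x y. kstep n k u w x y)"

definition inc_kchain :: "nat \<Rightarrow> nat \<Rightarrow> (nat \<Rightarrow> nat) list \<Rightarrow> bool" where
  "inc_kchain n k vs \<longleftrightarrow> vs \<noteq> [] \<and> (\<forall>v\<in>set vs. v permutes {1..n}) \<and>
     (\<forall>m. Suc m < length vs \<longrightarrow> kcover n k (vs ! m) (vs ! Suc m)) \<and>
     (\<forall>m m' x y x' y'. m < m' \<and> Suc m' < length vs \<and>
        kstep n k (vs ! m) (vs ! Suc m) x y \<and> kstep n k (vs ! m') (vs ! Suc m') x' y'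
        \<longrightarrow> min x y < min x' y')"

definition Sdown :: "nat \<Rightarrow> nat \<Rightarrow> (nat \<Rightarrow> nat) set" where
  "Sdown n k = {v. v permutes {1..n} \<and> (\<forall>p q. k < p \<and> p < q \<and> q \<le> n \<longrightarrow> v q < v p)}"

end

theory Submission
  imports Defs
begin

lemma ninv_card_le:
  fixes u w :: "nat \<Rightarrow> nat"
  assumes "1 \<le> p" "p < q" "q \<le> n" "u p < u q" "w = u \<circ> Transposition.transpose p q"
    and E: "E \<subseteq> {(p,q)} \<union> {(p,r)|r. p<r \<and> r<q \<and> u p<u r \<and> u r<u q}
                  \<union> {(r,q)|r. p<r \<and> r<q \<and> u p<u r \<and> u r<u q}"
  shows "ninv n u + card E \<le> ninv n w"
proof -
  define \<tau> where "\<tau> = Transposition.transpose p q"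
  define Iu where "Iu = {(r, s). 1 \<le> r \<and> r < s \<and> s \<le> n \<and> u s < u r}"
  define Iw where "Iw = {(r, s). 1 \<le> r \<and> r < s \<and> s \<le> n \<and> w s < w r}"
  define \<psi> where "\<psi> = (\<lambda>(r,s). if \<tau> r < \<tau> s then (\<tau> r, \<tau> s) else (r::nat, s::nat))"
  have tt: "\<tau> (\<tau> z) = z" for z by (simp add: \<tau>_def transpose_def)
  have wt: "w z = u (\<tau> z)" for z using assms(5) by (simp add: \<tau>_def)
  have fin: "finite Iw" unfolding Iw_def
    by (rule finite_subset[of _ "{1..n} \<times> {1..n}"]) auto
  have EIw: "E \<subseteq> Iw"
  proof
    fix e assume "e \<in> E"
    with E assms(1-4) show "e \<in> Iw" unfolding Iw_def wt \<tau>_def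
      by (auto simp: transpose_def)
  qed
  have inj: "inj_on \<psi> Iu"
  proof (rule inj_onI)
    fix e1 e2 assume "e1 \<in> Iu" "e2 \<in> Iu" "\<psi> e1 = \<psi> e2"
    then obtain r1 s1 r2 s2 where e: "e1 = (r1,s1)" "e2 = (r2,s2)" "r1 < s1" "r2 < s2"
      "\<psi> (r1,s1) = \<psi> (r2,s2)" unfolding Iu_def by auto
    show "e1 = e2"
    proof (cases "\<tau> r1 < \<tau> s1")
      case True
      show ?thesis
      proof (cases "\<tau> r2 < \<tau> s2")
        case True2: True
        with True e have "\<tau> r1 = \<tau> r2" "\<tau> s1 = \<tau> s2" by (auto simp: \<psi>_def)
        then have "r1 = r2" "s1 = s2" by (metis tt)+
        with e show ?thesis by simp
      next
        case False
        with True e have "\<tau> r1 = r2" "\<tau> s1 = s2" by (auto simp: \<psi>_def)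
        then have "\<tau> r2 = r1" "\<tau> s2 = s1" by (metis tt)+
        with False e show ?thesis by simp
      qed
    next
      case False
      show ?thesis
      proof (cases "\<tau> r2 < \<tau> s2")
        case True2: True
        with False e have "\<tau> r2 = r1" "\<tau> s2 = s1" by (auto simp: \<psi>_def)
        then have "\<tau> r1 = r2" "\<tau> s1 = s2" by (metis tt)+
        with False e show ?thesis by simp
      next
        case False2: False
        with False e show ?thesis by (auto simp: \<psi>_def)
      qed
    qed
  qed
  have img: "\<psi> ` Iu \<subseteq> Iw - E"
  proof
    fix e assume "e \<in> \<psi> ` Iu"
    then obtain r s where rs: "(r,s) \<in> Iu" "e = \<psi> (r,s)" by auto
    show "e \<in> Iw - E"
    proof (cases "\<tau> r < \<tau> s")
      case True
      then have e: "e = (\<tau> r, \<tau> s)" using rs by (simp add: \<psi>_def)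
      have "e \<in> Iw" using rs True assms(1-3) unfolding e Iw_def Iu_def wt tt
        by (auto simp: \<tau>_def transpose_def split: if_splits)
      moreover have "e \<notin> E"
      proof
        assume "e \<in> E"
        with E e rs True assms(1-3) show False unfolding Iu_def \<tau>_def
          by (auto simp: transpose_def split: if_splits)
      qed
      ultimately show ?thesis by simp
    next
      case False
      then have e: "e = (r, s)" using rs by (simp add: \<psi>_def)
      have "e \<in> Iw" using rs False assms(1-4) unfolding e Iw_def Iu_def wt
        by (auto simp: \<tau>_def transpose_def split: if_splits)
      moreover have "e \<notin> E"
      proof
        assume "e \<in> E"
        with E e rs False assms(1-4) show False unfolding Iu_def \<tau>_def
          by (auto simp: transpose_def split: if_splits)
      qed
      ultimately show ?thesis by simp
    qed
  qed
  have "card Iu \<le> card (Iw - E)"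
    using card_inj_on_le[OF inj img] fin by simp
  moreover have "card (Iw - E) = card Iw - card E"
    using EIw fin by (simp add: card_Diff_subset finite_subset)
  moreover have "card E \<le> card Iw" using EIw fin by (simp add: card_mono)
  ultimately show ?thesis unfolding ninv_def Iu_def Iw_def by linarith
qed

lemma transpose_invol: "Transposition.transpose p q (Transposition.transpose p q z) = z"
  by (simp add: transpose_def)

lemma cover_props:
  fixes u w :: "nat \<Rightarrow> nat"
  assumes perm: "u permutes {1..n}" and "1 \<le> p" "p < q" "q \<le> n"
    and w: "w = u \<circ> Transposition.transpose p q" and ni: "ninv n w = ninv n u + 1"
  shows "u p < u q" and "\<And>r. p < r \<Longrightarrow> r < q \<Longrightarrow> \<not> (u p < u r \<and> u r < u q)"
proof -
  have "u p \<noteq> u q" using permutes_inj[OF perm] assms(3) by (metis injD less_irrefl)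
  moreover have "\<not> u q < u p"
  proof
    assume lt: "u q < u p"
    have u: "u = w \<circ> Transposition.transpose p q" using w by (simp add: fun_eq_iff transpose_invol)
    have "ninv n w + card {(p,q)} \<le> ninv n u"
      by (rule ninv_card_le[OF assms(2-4) _ u]) (use lt w in auto)
    with ni show False by simp
  qed
  ultimately show "u p < u q" by simp
  fix r assume r: "p < r" "r < q"
  show "\<not> (u p < u r \<and> u r < u q)"
  proof
    assume h: "u p < u r \<and> u r < u q"
    have "ninv n u + card {(p,q),(p,r),(r,q)} \<le> ninv n w"
      by (rule ninv_card_le[OF assms(2-4) \<open>u p < u q\<close> w]) (use h r in auto)
    moreover have "card {(p,q),(p,r),(r,q)} = 3" using r by auto
    ultimately show False using ni by simp
  qed
qed

lemma kstep_uniq: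
  fixes u w :: "nat \<Rightarrow> nat"
  assumes perm: "u permutes {1..n}" and ks: "kstep n k u w x y"
    and pq: "p \<le> k" "k < q" and w: "w = u \<circ> Transposition.transpose p q"
  shows "x = u p \<and> y = u q"
proof -
  obtain i j where ij: "i \<le> k" "k < j" "w = u \<circ> Transposition.transpose i j" "x = u i" "y = u j"
    using ks unfolding kstep_def by blast
  have "Transposition.transpose i j = Transposition.transpose p q"
  proof
    fix z
    have "u (Transposition.transpose i j z) = u (Transposition.transpose p q z)"
      using ij(3) w by (metis comp_apply)
    then show "Transposition.transpose i j z = Transposition.transpose p q z"
      using permutes_inj[OF perm] by (simp add: inj_eq)
  qed
  then have "Transposition.transpose p q i = j" by (metis transpose_apply_first)
  then have "i = p \<and> j = q" using ij pq by (auto simp: transpose_def split: if_splits)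
  with ij show ?thesis by simp
qed


locale kch =
  fixes n k L :: nat and V :: "nat \<Rightarrow> nat \<Rightarrow> nat" and P Q :: "nat \<Rightarrow> nat"
  assumes perm: "t < L \<Longrightarrow> V t permutes {1..n}"
    and bnd: "Suc t < L \<Longrightarrow> 1 \<le> P t \<and> P t \<le> k \<and> k < Q t \<and> Q t \<le> n"
    and stp: "Suc t < L \<Longrightarrow> V (Suc t) = V t \<circ> Transposition.transpose (P t) (Q t)"
    and lt: "Suc t < L \<Longrightarrow> V t (P t) < V t (Q t)"
    and cov: "Suc t < L \<Longrightarrow> P t < r \<Longrightarrow> r < Q t \<Longrightarrow> \<not> (V t (P t) < V t r \<and> V t r < V t (Q t))"
    and incr: "t < t' \<Longrightarrow> Suc t' < L \<Longrightarrow> V t (P t) < V t' (P t')"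
    and sdown: "0 < L \<Longrightarrow> k < p \<Longrightarrow> p < q \<Longrightarrow> q \<le> n \<Longrightarrow> V (L-1) q < V (L-1) p"
begin

lemma injV: "t < L \<Longrightarrow> V t r = V t s \<longleftrightarrow> r = s"
  using permutes_inj[OF perm] by (meson injD)

lemma stepP: "Suc t < L \<Longrightarrow> V (Suc t) (P t) = V t (Q t)"
  using stp by simp
lemma stepQ: "Suc t < L \<Longrightarrow> V (Suc t) (Q t) = V t (P t)"
  using stp by simp
lemma stepO: "Suc t < L \<Longrightarrow> r \<noteq> P t \<Longrightarrow> r \<noteq> Q t \<Longrightarrow> V (Suc t) r = V t r"
  using stp by simp

lemma top:
  assumes "r \<le> k" "t1 \<le> t2" "t2 < L"
  shows "V t1 r \<le> V t2 r \<and> (V t2 r \<noteq> V t1 r \<longrightarrow> (\<exists>t'. t1 \<le> t' \<and> t' < t2 \<and> V t' (P t') = V t1 r))"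
  using assms(2,3)
proof (induction t2)
  case 0
  then show ?case by simp
next
  case (Suc t2)
  show ?case
  proof (cases "t1 = Suc t2")
    case True then show ?thesis by simp
  next
    case False
    with Suc.prems have le: "t1 \<le> t2" by simp
    note IH = Suc.IH[OF le Suc_lessD[OF Suc.prems(2)]]
    have b: "1 \<le> P t2 \<and> P t2 \<le> k \<and> k < Q t2 \<and> Q t2 \<le> n" using bnd Suc.prems by blast
    show ?thesis
    proof (cases "r = P t2")
      case True
      have "V (Suc t2) r = V t2 (Q t2)" using True stepP Suc.prems by simp
      moreover have "V t2 (P t2) < V t2 (Q t2)" using lt Suc.prems by simp
      ultimately show ?thesis using IH True le
        by (metis dual_order.strict_trans2 less_Suc_eq nless_le)
    next
      case False
      have "r \<noteq> Q t2" using b assms(1) by auto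
      then have "V (Suc t2) r = V t2 r" using stepO False Suc.prems by simp
      then show ?thesis using IH by (metis less_Suc_eq)
    qed
  qed
qed

lemma pos:
  assumes m: "Suc m < L" and c: "V m (P m) < c" "c < V m (Q m)" and s: "V m s = c" "s \<le> n"
  shows "s < P m"
proof -
  have b: "1 \<le> P m \<and> P m \<le> k \<and> k < Q m \<and> Q m \<le> n" using bnd m by blast
  have "s \<noteq> P m" "s \<noteq> Q m" using c s by auto
  moreover have "\<not> (P m < s \<and> s < Q m)" using cov[OF m] c s by blast
  moreover have "\<not> Q m < s"
  proof
    assume sq: "Q m < s"
    have invr: "V t (Q m) = V m (P m) \<and> V m (P m) < V t s" if "Suc m \<le> t" "t < L" for t
      using that
    proof (induction t)
      case 0 then show ?case by simp
    next
      case (Suc t)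
      show ?case
      proof (cases "t = m")
        case True
        then show ?thesis using stepQ[OF m] stepO[OF m, of s] sq b c s by auto
      next
        case False
        then have tm: "Suc m \<le> t" "m < t" using Suc.prems by auto
        note IH = Suc.IH[OF tm(1) Suc_lessD[OF Suc.prems(2)]]
        have bt: "1 \<le> P t \<and> P t \<le> k \<and> k < Q t \<and> Q t \<le> n" using bnd Suc.prems by blast
        have inc: "V m (P m) < V t (P t)" using incr[OF tm(2) Suc.prems(2)] .
        have ltt: "V t (P t) < V t (Q t)" using lt Suc.prems(2) by simp
        have q1: "Q m \<noteq> Q t"
        proof
          assume "Q m = Q t"
          with IH ltt inc show False by simp
        qed
        have q2: "Q m \<noteq> P t" using bt b by simp
        have "V (Suc t) (Q m) = V t (Q m)" using stepO[OF Suc.prems(2) q2 q1] .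
        moreover have "V m (P m) < V (Suc t) s"
        proof (cases "s = Q t")
          case True
          then show ?thesis using stepQ[OF Suc.prems(2)] inc by simp
        next
          case False
          have "s \<noteq> P t" using bt b sq by simp
          then show ?thesis using stepO[OF Suc.prems(2) _ False] IH by simp
        qed
        ultimately show ?thesis using IH by simp
      qed
    qed
    have L0: "0 < L" "Suc m \<le> L - 1" "L - 1 < L" using m by auto
    have "V (L-1) s < V (L-1) (Q m)" using sdown[OF L0(1)] b sq s by simp
    with invr[OF L0(2,3)] show False by simp
  qed
  ultimately show ?thesis by linarith
qed

lemma backw:
  assumes m: "Suc m < L" and c: "V m (P m) < c" "c < V m (Q m)" and s: "V m s = c" "s < P m"
  shows "t \<le> m \<Longrightarrow> V t s = c"
proof -
  have b: "1 \<le> P m \<and> P m \<le> k \<and> k < Q m \<and> Q m \<le> n" using bnd m by blast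
  have "V (m - j) s = c" if "j \<le> m" for j
    using that
  proof (induction j)
    case 0 then show ?case using s by simp
  next
    case (Suc j)
    define t where "t = m - Suc j"
    have tS: "Suc t = m - j" "t < m" "Suc t < L" using Suc.prems m unfolding t_def by auto
    have IH: "V (Suc t) s = c" using Suc.IH Suc.prems tS(1) by simp
    have bt: "1 \<le> P t \<and> P t \<le> k \<and> k < Q t \<and> Q t \<le> n" using bnd tS by blast
    show ?case unfolding t_def[symmetric]
    proof (rule ccontr)
      assume ne: "V t s \<noteq> c"
      have sQ: "s \<noteq> Q t" using bt b s by simp
      have sP: "s = P t" using stepO[OF tS(3) _ sQ] ne IH by metis
      have Y: "V t (Q t) = c" using stepP[OF tS(3)] sP IH by simp
      have Xa: "V t (P t) < V m (P m)" using incr[OF tS(2) m] .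
      have pm: "P t < P m" "P m < Q t" using sP s bt b by auto
      have cv: "\<not> (V t (P t) < V t (P m) \<and> V t (P m) < V t (Q t))" using cov[OF tS(3) pm] .
      have mono: "V t (P m) \<le> V m (P m)" using top[of "P m" t m] b tS m by simp
      have neq: "V t (P m) \<noteq> V t (P t)" using injV[of t] tS pm by simp
      have small: "V t (P m) < V t (P t)" using cv mono neq Y c by linarith
      have eq1: "V (Suc t) (P m) = V t (P m)" using stepO[OF tS(3)] pm by simp
      have "V m (P m) \<noteq> V (Suc t) (P m)" using eq1 small Xa by simp
      then obtain t' where t': "Suc t \<le> t'" "t' < m" "V t' (P t') = V (Suc t) (P m)"
        using top[of "P m" "Suc t" m] b tS m by auto
      have "V t (P t) < V t' (P t')" using incr[of t t'] t' m by simp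
      with t' eq1 small show False by simp
    qed
  qed
  then show "t \<le> m \<Longrightarrow> V t s = c" by (metis diff_diff_cancel diff_le_self)
qed

lemma posex: "t < L \<Longrightarrow> 1 \<le> c \<Longrightarrow> c \<le> n \<Longrightarrow> \<exists>s. 1 \<le> s \<and> s \<le> n \<and> V t s = c"
  using permutes_image[OF perm[of t]] by (metis atLeastAtMost_iff imageE)

lemma valb: "t < L \<Longrightarrow> 1 \<le> r \<Longrightarrow> r \<le> n \<Longrightarrow> 1 \<le> V t r \<and> V t r \<le> n"
  using permutes_in_image[OF perm[of t]] by simp

lemma mid:
  assumes m: "Suc m < L" and c: "V m (P m) < c" "c < V m (Q m)"
  shows "\<exists>s. s < P m \<and> V m s = c \<and> (\<forall>t\<le>m. V t s = c)"
proof -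
  have b: "1 \<le> P m \<and> P m \<le> k \<and> k < Q m \<and> Q m \<le> n" using bnd m by blast
  have "V m (Q m) \<le> n" using valb[of m "Q m"] b m by simp
  then obtain s where s: "1 \<le> s" "s \<le> n" "V m s = c" using posex[of m c] c m by auto
  have "s < P m" using pos[OF m c s(3,2)] .
  with backw[OF m c s(3)] s show ?thesis by blast
qed

lemma fwd:
  assumes m: "Suc m < L"
  shows "m < t \<Longrightarrow> Suc t < L \<Longrightarrow> V m (P m) < c \<Longrightarrow> c < V m (Q m)
     \<Longrightarrow> V t (P t) \<noteq> c \<and> V t (Q t) \<noteq> c"
proof (induction t arbitrary: c rule: less_induct)
  case (less t)
  have b: "1 \<le> P m \<and> P m \<le> k \<and> k < Q m \<and> Q m \<le> n" using bnd m by blast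
  have bt: "1 \<le> P t \<and> P t \<le> k \<and> k < Q t \<and> Q t \<le> n" using bnd less.prems by blast
  have stay: "V t' s = d" if d: "V m (P m) < d" "d < V m (Q m)" and sd: "V m s = d" "s < P m"
     and "m \<le> t'" "t' \<le> t" for d s t'
    using that(5,6)
  proof (induction t')
    case 0 then show ?case using sd by simp
  next
    case (Suc t')
    show ?case
    proof (cases "m = Suc t'")
      case True then show ?thesis using sd by simp
    next
      case False
      then have mt: "m \<le> t'" "t' < t" using Suc.prems by auto
      have IH: "V t' s = d" using Suc.IH mt by simp
      have st: "Suc t' < L" using mt less.prems by simp
      have ne: "V t' (P t') \<noteq> d \<and> V t' (Q t') \<noteq> d"
      proof (cases "t' = m")
        case True then show ?thesis using d by simp
      next
        case False
        then show ?thesis using less.IH[OF mt(2) _ st d] mt by simp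
      qed
      then have "s \<noteq> P t'" "s \<noteq> Q t'" using IH by auto
      then show ?thesis using stepO[OF st] IH by simp
    qed
  qed
  obtain s where s: "s < P m" "V m s = c" using mid[OF m less.prems(3,4)] by blast
  have cs: "V t s = c" using stay[OF less.prems(3,4) s(2,1)] less.prems by simp
  have sk: "s \<le> k" using s b by simp
  have tL: "t < L" using less.prems by simp
  have Yne: "V t (Q t) \<noteq> c" using cs injV[OF tL, of "Q t" s] sk bt by auto
  moreover have "V t (P t) \<noteq> c"
  proof
    assume X: "V t (P t) = c"
    have ltt: "V t (P t) < V t (Q t)" using lt less.prems by simp
    consider "V t (Q t) < V m (Q m)" | "V t (Q t) = V m (Q m)" | "V m (Q m) < V t (Q t)"
      by linarith
    then show False
    proof cases
      case 1
      obtain s' where s': "s' < P m" "V m s' = V t (Q t)"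
        using mid[OF m, of "V t (Q t)"] 1 X ltt less.prems by auto
      have "V t s' = V t (Q t)" using stay[OF _ 1 s'(2,1)] X ltt less.prems by simp
      then have "s' = Q t" using injV[OF tL] by simp
      with s' b bt show False by simp
    next
      case 2
      have eqb: "V (Suc m) (P m) = V m (Q m)" using stepP[OF m] .
      have "V t (P m) \<noteq> V m (Q m)" using 2 injV[OF tL, of "P m" "Q t"] b bt by auto
      then obtain t' where t': "Suc m \<le> t'" "t' < t" "V t' (P t') = V m (Q m)"
        using top[of "P m" "Suc m" t] b less.prems eqb by auto
      have "V t' (P t') < V t (P t)" using incr[OF t'(2)] less.prems by simp
      with t' X less.prems show False by simp
    next
      case 3
      have mb: "V t (P t) < V m (Q m)" using X less.prems by simp
      obtain sb where sb: "sb < P t" "V t sb = V m (Q m)" "\<forall>t''\<le>t. V t'' sb = V m (Q m)"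
        using mid[OF less.prems(2) mb 3] by blast
      have "V m sb = V m (Q m)" "V (Suc m) sb = V m (Q m)" using sb(3) less.prems by auto
      then have "sb = Q m" "sb = P m" using injV[of m sb "Q m"] injV[of "Suc m" sb "P m"] stepP[OF m] m
        by auto
      with b show False by simp
    qed
  qed
  ultimately show ?case by simp
qed

end

theorem lemma3p14:
  fixes n k m i a b x y :: nat and u w :: "nat \<Rightarrow> nat" and vs :: "(nat \<Rightarrow> nat) list"
  assumes "1 \<le> k" and "k \<le> n - 1"
    and "w \<in> Sdown n k"
    and "inc_kchain n k vs" and "hd vs = u" and "last vs = w"
    and "Suc m < length vs"
    and "kstep n k (vs ! m) (vs ! Suc m) x y"
    and "{a, b} = {x, y}" and "a < b"
    and "1 \<le> i" and "i \<le> n" and "(vs ! Suc m) i = b"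
  shows "b \<notin> u ` {1..k}
    \<and> (\<forall>c. a < c \<and> c < b \<longrightarrow> inv u c < i)
    \<and> (\<forall>c. a < c \<and> c < b \<longrightarrow>
           (\<forall>m' x' y'. Suc m' < length vs \<and> kstep n k (vs ! m') (vs ! Suc m') x' y'
              \<longrightarrow> c \<noteq> x' \<and> c \<noteq> y'))"
proof -
  define L where "L = length vs"
  define V where "V = (\<lambda>t. vs ! t)"
  have ch: "vs \<noteq> []" "\<And>v. v \<in> set vs \<Longrightarrow> v permutes {1..n}"
    "\<And>t. Suc t < L \<Longrightarrow> kcover n k (V t) (V (Suc t))"
    "\<And>t t' x y x' y'. t < t' \<Longrightarrow> Suc t' < L \<Longrightarrow> kstep n k (V t) (V (Suc t)) x y
       \<Longrightarrow> kstep n k (V t') (V (Suc t')) x' y' \<Longrightarrow> min x y < min x' y'"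
    using assms(4) unfolding inc_kchain_def L_def V_def by blast+
  have permV: "t < L \<Longrightarrow> V t permutes {1..n}" for t
    using ch(2) unfolding V_def L_def by simp
  have "\<forall>t. \<exists>pq::nat\<times>nat. Suc t < L \<longrightarrow> (1 \<le> fst pq \<and> fst pq \<le> k \<and> k < snd pq \<and> snd pq \<le> n \<and>
      V (Suc t) = V t \<circ> Transposition.transpose (fst pq) (snd pq) \<and> ninv n (V (Suc t)) = ninv n (V t) + 1)"
  proof
    fix t
    show "\<exists>pq::nat\<times>nat. Suc t < L \<longrightarrow> (1 \<le> fst pq \<and> fst pq \<le> k \<and> k < snd pq \<and> snd pq \<le> n \<and>
      V (Suc t) = V t \<circ> Transposition.transpose (fst pq) (snd pq) \<and> ninv n (V (Suc t)) = ninv n (V t) + 1)"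
    proof (cases "Suc t < L")
      case True
      then obtain x y where "kstep n k (V t) (V (Suc t)) x y" using ch(3) unfolding kcover_def by blast
      then obtain p q where "1 \<le> p \<and> p \<le> k \<and> k < q \<and> q \<le> n \<and>
      V (Suc t) = V t \<circ> Transposition.transpose p q \<and> ninv n (V (Suc t)) = ninv n (V t) + 1"
        unfolding kstep_def by blast
      then show ?thesis by (metis fst_conv snd_conv)
    qed simp
  qed
  then obtain f where f: "\<And>t. Suc t < L \<Longrightarrow> (1 \<le> fst (f t) \<and> fst (f t) \<le> k \<and> k < snd (f t) \<and> snd (f t) \<le> n \<and>
      V (Suc t) = V t \<circ> Transposition.transpose (fst (f t)) (snd (f t)) \<and> ninv n (V (Suc t)) = ninv n (V t) + 1)"
    by metis
  define P where "P = (\<lambda>t. fst (f t))"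
  define Q where "Q = (\<lambda>t. snd (f t))"
  have fP: "Suc t < L \<Longrightarrow> 1 \<le> P t \<and> P t \<le> k \<and> k < Q t \<and> Q t \<le> n \<and>
      V (Suc t) = V t \<circ> Transposition.transpose (P t) (Q t) \<and> ninv n (V (Suc t)) = ninv n (V t) + 1" for t
    using f unfolding P_def Q_def by blast
  have cp: "V t (P t) < V t (Q t) \<and> (\<forall>r. P t < r \<longrightarrow> r < Q t \<longrightarrow> \<not> (V t (P t) < V t r \<and> V t r < V t (Q t)))"
    if "Suc t < L" for t
  proof -
    have b: "1 \<le> P t" "P t < Q t" "Q t \<le> n" using fP[OF that] by auto
    have pm: "V t permutes {1..n}" using permV that by simp
    show ?thesis using cover_props[OF pm b _] fP[OF that] by blast
  qed
  have ks: "kstep n k (V t) (V (Suc t)) (V t (P t)) (V t (Q t))" if "Suc t < L" for t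
    unfolding kstep_def using fP[OF that] by blast
  have uq: "kstep n k (V t) (V (Suc t)) x y \<Longrightarrow> x = V t (P t) \<and> y = V t (Q t)" if "Suc t < L" for t x y
    using kstep_uniq[OF permV[of t]] fP[OF that] that by auto
  interpret kch n k L V P Q
  proof
    show "\<And>t. t < L \<Longrightarrow> V t permutes {1..n}" by (rule permV)
    show "\<And>t. Suc t < L \<Longrightarrow> 1 \<le> P t \<and> P t \<le> k \<and> k < Q t \<and> Q t \<le> n" using fP by blast
    show "\<And>t. Suc t < L \<Longrightarrow> V (Suc t) = V t \<circ> Transposition.transpose (P t) (Q t)" using fP by blast
    show "\<And>t. Suc t < L \<Longrightarrow> V t (P t) < V t (Q t)" using cp by blast
    show "\<And>t r. Suc t < L \<Longrightarrow> P t < r \<Longrightarrow> r < Q t \<Longrightarrow> \<not> (V t (P t) < V t r \<and> V t r < V t (Q t))"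
      using cp by blast
    show "\<And>t t'. t < t' \<Longrightarrow> Suc t' < L \<Longrightarrow> V t (P t) < V t' (P t')"
    proof -
      fix t t' assume tt: "t < t'" "Suc t' < L"
      have "min (V t (P t)) (V t (Q t)) < min (V t' (P t')) (V t' (Q t'))"
        using ch(4)[OF tt ks ks] tt by simp
      moreover have "V t (P t) < V t (Q t)" "V t' (P t') < V t' (Q t')" using cp tt by auto
      ultimately show "V t (P t) < V t' (P t')" by simp
    qed
    show "\<And>p q. 0 < L \<Longrightarrow> k < p \<Longrightarrow> p < q \<Longrightarrow> q \<le> n \<Longrightarrow> V (L - 1) q < V (L - 1) p"
    proof -
      fix p q assume "0 < L" "k < p" "p < q" "q \<le> n"
      moreover have "V (L-1) = w" using assms(6) ch(1) unfolding V_def L_def by (simp add: last_conv_nth)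
      ultimately show "V (L - 1) q < V (L - 1) p" using assms(3) unfolding Sdown_def by blast
    qed
  qed
  have m: "Suc m < L" using assms(7) L_def by simp
  have xy: "x = V m (P m)" "y = V m (Q m)" using uq[OF m] assms(8) V_def by auto
  have "(a = x \<and> b = y) \<or> (a = y \<and> b = x)" using assms(9) by (simp add: doubleton_eq_iff)
  then have ab: "a = V m (P m)" "b = V m (Q m)" using assms(10) xy cp[OF m] by auto
  have bm: "1 \<le> P m \<and> P m \<le> k \<and> k < Q m \<and> Q m \<le> n" using fP[OF m] by blast
  have iP: "i = P m" using assms(13) ab stepP[OF m] injV[of "Suc m" i "P m"] m V_def by simp
  have u0: "u = V 0" using assms(5) ch(1) unfolding V_def by (simp add: hd_conv_nth)
  have part1: "b \<notin> u ` {1..k}"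
  proof
    assume "b \<in> u ` {1..k}"
    then obtain r where r: "1 \<le> r" "r \<le> k" "V 0 r = b" using u0 by auto
    have "V m r \<noteq> b" using injV[of m r "Q m"] ab r bm m by auto
    then obtain t' where "t' < m" "V t' (P t') = b" using top[of r 0 m] r m by auto
    then have "b < a" using incr[of t' m] m ab by simp
    with assms(10) show False by simp
  qed
  have part2: "inv u c < i" if c: "a < c" "c < b" for c
  proof -
    obtain s where s: "s < P m" "V m s = c" "\<forall>t\<le>m. V t s = c" using mid[OF m] c ab by auto
    have "u s = c" using s u0 by simp
    then have "inv u c = s" using permutes_inv_eq[OF permV[of 0]] u0 m by simp
    with s iP show ?thesis by simp
  qed
  have part3: "c \<noteq> x' \<and> c \<noteq> y'"
    if c: "a < c" "c < b" and mk: "Suc m' < length vs" "kstep n k (vs ! m') (vs ! Suc m') x' y'" for c m' x' y'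
  proof -
    have m': "Suc m' < L" using mk L_def by simp
    have xy': "x' = V m' (P m')" "y' = V m' (Q m')" using uq[OF m'] mk V_def by auto
    obtain s where s: "s < P m" "V m s = c" "\<forall>t\<le>m. V t s = c" using mid[OF m] c ab by auto
    consider "m' < m" | "m' = m" | "m < m'" by linarith
    then show ?thesis
    proof cases
      case 1
      have e: "V m' s = c" "V (Suc m') s = c" using s 1 by auto
      have lt': "V m' (P m') < V m' (Q m')" using cp[OF m'] by blast
      have "s \<noteq> P m'"
      proof
        assume sp: "s = P m'" then have "V (Suc m') s = V m' (Q m')" using stepP[OF m'] by simp
        with e lt' sp show False by simp
      qed
      moreover have "s \<noteq> Q m'"
      proof
        assume sq: "s = Q m'" then have "V (Suc m') s = V m' (P m')" using stepQ[OF m'] by simp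
        with e lt' sq show False by simp
      qed
      ultimately have "V m' (P m') \<noteq> c" "V m' (Q m') \<noteq> c"
        using injV[of m' "P m'" s] injV[of m' "Q m'" s] e m' by auto
      then show ?thesis using xy' by simp
    next
      case 2 then show ?thesis using xy' ab c by simp
    next
      case 3 then show ?thesis using fwd[OF m 3 m'] c ab xy' by metis
    qed
  qed
  show ?thesis using part1 part2 part3 by blast
qed

end
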